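(* Suppose the representation has a single equivalence class $h$ of irreducible components, with multiplicity $m_h\ge1$, so $\mathcal H=\mathcal H_h\otimes\mathbb C^{m_h}$ and $\mathcal C=\{\Xi\ge0:\operatorname{Tr}_{\mathcal H_h}(\Xi)=d_{\mathcal H_h}I_{m_h}\}$. Let $\Xi\in\mathcal C$ and write $\Xi=\sum_{i=1}^r|w_i\rangle\langle w_i|$ with $r=\operatorname{rank}\Xi$ and $\{|w_i\rangle\}$ mutually orthogonal nonzero vectors (spectral decomposition with eigenvalues absorbed). Fix an orthonormal basis $\{|l\rangle\}$ of $\mathcal H_h$ and define $W_i\in\mathcal B(\mathcal H_h,\mathbb C^{m_h})$ by $|w_i\rangle=\sum_l|l\rangle\otimes W_i|l\rangle$. Then $\Xi$ is extremal in $\mathcal C$ if and only if the operators $\{W_iW_j^\dagger\}_{i,j=1}^r\subseteq\mathcal B(\mathbb C^{m_h})$ are linearly independent. In particular, every extremal $\Xi$ has $\operatorname{rank}(\Xi)\le m_h$.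
   Context: Let $G$ be a group with a unitary representation $g\mapsto U_g$ on a finite-dimensional Hilbert space $\mathcal H$ which is a multiple of a single irreducible representation: $\mathcal H=\mathcal H_h\otimes\mathbb C^{m_h}$, $U_g=U^{(h)}_g\otimes I_{m_h}$ with $U^{(h)}$ irreducible on $\mathcal H_h$; $d_{\mathcal H_h}=\dim\mathcal H_h$ and $\operatorname{Tr}_{\mathcal H_h}$ is the partial trace over $\mathcal H_h$. $\mathcal C$ is the convex set of seeds $\Xi$ of covariant POVMs $dP_g=U_g^\dagger\Xi U_g\,dg$. *)

theory Defs
  imports "HOL-Analysis.Analysis" "HOL-Library.Complex_Order"
begin

text \<open>Hilbert space H = H_h \<otimes> C^m, modelled as complex^('d \<times> 'm):
  the basis vector |l> \<otimes> |a> has index (l, a). Operators are complex matrices.\<close>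

definition cinner :: "complex^'n::finite \<Rightarrow> complex^'n \<Rightarrow> complex" where
  "cinner x y = (\<Sum>k\<in>UNIV. cnj (x $ k) * y $ k)"

definition outer :: "complex^'n \<Rightarrow> complex^'k \<Rightarrow> complex^'k^'n" where
  "outer u v = (\<chi> x y. u $ x * cnj (v $ y))"

definition adj :: "complex^'c^'r \<Rightarrow> complex^'r^'c" where
  "adj A = (\<chi> i j. cnj (A $ j $ i))"

text \<open>Positive semidefinite: <x, A x> \<ge> 0 for all x (complex order; implies Hermitian).\<close>
definition psd :: "complex^'n::finite^'n \<Rightarrow> bool" where
  "psd A \<longleftrightarrow> (\<forall>x. 0 \<le> cinner x (A *v x))"

definition ptrace_h :: "complex^('d::finite \<times> 'm::finite)^('d \<times> 'm) \<Rightarrow> complex^'m^'m" where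
  "ptrace_h X = (\<chi> a b. \<Sum>l\<in>UNIV. X $ (l, a) $ (l, b))"

definition seeds :: "(complex^('d::finite \<times> 'm::finite)^('d \<times> 'm)) set" where
  "seeds = {X. psd X \<and> ptrace_h X = mat (of_nat CARD('d))}"

definition lin_indep_family :: "('i \<Rightarrow> complex^'c^'r) \<Rightarrow> 'i set \<Rightarrow> bool" where
  "lin_indep_family f I \<longleftrightarrow>
     (\<forall>c. (\<Sum>i\<in>I. (\<chi> a b. c i * f i $ a $ b)) = 0 \<longrightarrow> (\<forall>i\<in>I. c i = 0))"

end

theory Submission
  imports Defs
begin


lemma cinner_add_right: "cinner x (y + z) = cinner x y + cinner x z"
  by (simp add: cinner_def distrib_left sum.distrib)
lemma cinner_add_left: "cinner (x + y) z = cinner x z + cinner y z"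
  by (simp add: cinner_def distrib_right sum.distrib)
lemma cinner_diff_right: "cinner x (y - z) = cinner x y - cinner x z"
  by (simp add: cinner_def right_diff_distrib sum_subtractf)
lemma cinner_diff_left: "cinner (x - y) z = cinner x z - cinner y z"
  by (simp add: cinner_def left_diff_distrib sum_subtractf)
lemma cinner_scale_right: "cinner x (c *s y) = c * cinner x y"
  by (simp add: cinner_def sum_distrib_left mult.left_commute)
lemma cinner_scale_left: "cinner (c *s x) y = cnj c * cinner x y"
  by (simp add: cinner_def sum_distrib_left mult.assoc)
lemma cinner_sum_right: "cinner x (sum f S) = (\<Sum>i\<in>S. cinner x (f i))"
  by (simp add: cinner_def sum_component sum_distrib_left sum.swap[of _ S])
lemma cinner_sum_left: "cinner (sum f S) y = (\<Sum>i\<in>S. cinner (f i) y)"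
  by (simp add: cinner_def sum_component sum_distrib_right sum.swap[of _ S])
lemma cinner_cnj: "cnj (cinner x y) = cinner y x"
  by (simp add: cinner_def mult.commute)
lemma cinner_zero_right[simp]: "cinner x 0 = 0" by (simp add: cinner_def)
lemma cinner_zero_left[simp]: "cinner 0 x = 0" by (simp add: cinner_def)
lemma cinner_self: "cinner x x = of_real (\<Sum>k\<in>UNIV. (cmod (x$k))^2)"
  unfolding cinner_def of_real_sum
  by (rule sum.cong[OF refl]) (metis complex_norm_square mult.commute)
lemma cinner_self_eq0: "cinner x x = 0 \<longleftrightarrow> x = 0"
proof
  assume "cinner x x = 0"
  then have "(\<Sum>k\<in>UNIV. (cmod (x$k))^2) = 0" unfolding cinner_self of_real_eq_0_iff .
  then have "\<forall>k\<in>UNIV. (cmod (x$k))^2 = 0"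
    by (subst (asm) sum_nonneg_eq_0_iff) auto
  then show "x = 0" by (simp add: vec_eq_iff)
qed simp
lemma cinner_self_ge0: "0 \<le> cinner x x"
  unfolding cinner_self less_eq_complex_def by (simp add: sum_nonneg)

lemma sum_mat_mv: "(sum A S) *v x = (\<Sum>i\<in>S. A i *v x)"
  by (simp add: vec_eq_iff matrix_vector_mult_def sum_component sum_distrib_right sum.swap[of _ S])
lemma outer_mv: "outer u v *v x = cinner v x *s u"
  by (simp add: vec_eq_iff matrix_vector_mult_def outer_def cinner_def sum_distrib_left mult_ac)
lemma cinner_mv: "cinner x (A *v y) = (\<Sum>k\<in>UNIV. \<Sum>l\<in>UNIV. cnj (x$k) * A$k$l * y$l)"
  by (simp add: cinner_def matrix_vector_mult_def sum_distrib_left mult_ac)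
lemma mv_minus: "(A - B) *v (x::complex^'n) = A *v x - B *v x"
  by (simp add: matrix_vector_mult_diff_rdistrib)
lemma mv_minus_old: "(A - B) *v (x::complex^'n) = A *v x - B *v x"
  unfolding vec_eq_iff matrix_vector_mult_def
proof
  fix i
  show "(\<chi> i. \<Sum>j\<in>UNIV. (A - B) $ i $ j * x $ j) $ i = ((\<chi> i. \<Sum>j\<in>UNIV. A $ i $ j * x $ j) - (\<chi> i. \<Sum>j\<in>UNIV. B $ i $ j * x $ j)) $ i"
    by (simp add: sum_subtractf[symmetric] left_diff_distrib)
qed
lemma axis_mv: "A *v axis j 1 = (\<chi> i. A$i$j)"
  by (simp add: vec_eq_iff matrix_vector_mult_def axis_def if_distrib cong: if_cong)
lemma cinner_axis_left: "cinner (axis j 1) y = y $ j"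
proof -
  have "cinner (axis j 1) y = (\<Sum>k\<in>UNIV. if k = j then y$k else 0)"
    unfolding cinner_def by (rule sum.cong) (auto simp: axis_def)
  then show ?thesis by simp
qed
lemma cinner_axis_right: "cinner y (axis j 1) = cnj (y $ j)"
  by (metis cinner_axis_left cinner_cnj)
lemma scaleR_mat_mv: "(c *\<^sub>R A) *v (x::complex^'n) = of_real c *s (A *v x)"
  unfolding vec_eq_iff matrix_vector_mult_def
proof
  fix i
  have h: "\<And>i j. (c *\<^sub>R A) $ i $ j = of_real c * A $ i $ j"
    by (simp only: vector_scaleR_component) (simp add: scaleR_conv_of_real)
  show "(\<chi> i. \<Sum>j\<in>UNIV. (c *\<^sub>R A) $ i $ j * x $ j) $ i = (of_real c *s (\<chi> i. \<Sum>j\<in>UNIV. A $ i $ j * x $ j)) $ i"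
    unfolding h by (simp add: sum_distrib_left mult.assoc scaleR_conv_of_real)
qed



lemma psd_Im: "psd A \<Longrightarrow> Im (cinner x (A *v x)) = 0"
  unfolding psd_def less_eq_complex_def by (metis zero_complex.sel(2))
lemma psd_Re: "psd A \<Longrightarrow> 0 \<le> Re (cinner x (A *v x))"
  unfolding psd_def less_eq_complex_def by (metis zero_complex.sel(1))

lemma psd_herm:
  assumes "psd A"
  shows "cinner y (A *v x) = cnj (cinner x (A *v y))"
proof -
  let ?f = "\<lambda>x y. cinner x (A *v y)"
  have "Im (?f (x+y) (x+y)) = 0" using psd_Im[OF assms] .
  then have e1: "Im (?f x y) + Im (?f y x) = 0"
    using psd_Im[OF assms, of x] psd_Im[OF assms, of y]
    by (simp add: cinner_add_left cinner_add_right matrix_vector_right_distrib)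
  have "Im (?f (x + \<i> *s y) (x + \<i> *s y)) = 0" using psd_Im[OF assms] .
  then have e2: "Re (?f x y) - Re (?f y x) = 0"
    using psd_Im[OF assms, of x] psd_Im[OF assms, of y]
    by (simp add: cinner_add_left cinner_add_right matrix_vector_right_distrib
        vector_scalar_commute cinner_scale_left cinner_scale_right)
  show ?thesis using e1 e2 by (simp add: complex_eq_iff)
qed

lemma psd_kernel:
  assumes "psd A" and "cinner y (A *v y) = 0"
  shows "A *v y = 0"
proof (rule ccontr)
  assume nz: "A *v y \<noteq> 0"
  define z where "z = A *v y"
  define N where "N = Re (cinner z z)"
  define Q where "Q = Re (cinner z (A *v z))"
  have Npos: "N > 0"
  proof -
    have "0 \<le> cinner z z" by (rule cinner_self_ge0)
    moreover have "cinner z z \<noteq> 0" using nz by (simp add: z_def cinner_self_eq0)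
    ultimately show ?thesis unfolding N_def less_eq_complex_def by (simp add: complex_eq_iff)
  qed
  have Qnn: "Q \<ge> 0" unfolding Q_def by (rule psd_Re[OF assms(1)])
  have zz: "Im (cinner z z) = 0" using cinner_self_ge0[of z] by (simp add: less_eq_complex_def)
  have fzy: "cinner z (A *v y) = cinner z z" by (simp add: z_def)
  have fyz: "cinner y (A *v z) = cinner z z"
    using psd_herm[OF assms(1), of y z] fzy by (simp add: cinner_cnj)
  define s where "s = N / (Q + 1)"
  have spos: "s > 0" using Npos Qnn by (simp add: s_def)
  define v where "v = y - of_real s *s z"
  have "cinner v (A *v v) = cinner y (A *v y) - of_real s * cinner y (A *v z)
      - of_real s * cinner z (A *v y) + of_real s * of_real s * cinner z (A *v z)"
    by (simp add: v_def cinner_diff_left cinner_diff_right matrix_vector_mult_diff_distrib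
        vector_scalar_commute cinner_scale_left cinner_scale_right algebra_simps)
  then have "Re (cinner v (A *v v)) = - 2 * s * N + s * s * Q"
    using assms(2) fzy fyz by (simp add: N_def Q_def)
  moreover have "- 2 * s * N + s * s * Q < 0"
  proof -
    have "s * Q < N" using Npos Qnn by (simp add: s_def field_simps)
    then have "s * (s * Q) < s * N" using spos by simp
    moreover have "s * s * Q = s * (s * Q)" by simp
    moreover have "0 < s * N" using spos Npos by simp
    ultimately show ?thesis by linarith
  qed
  moreover have "0 \<le> Re (cinner v (A *v v))" by (rule psd_Re[OF assms(1)])
  ultimately show False by linarith
qed



lemma sum_single:
  assumes "finite S" "i \<in> S" "\<And>j. j \<in> S \<Longrightarrow> j \<noteq> i \<Longrightarrow> f j = 0"
  shows "sum f S = f i"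
proof -
  have "sum f S = f i + sum f (S - {i})" using assms by (simp add: sum.remove)
  also have "sum f (S - {i}) = 0" using assms by (intro sum.neutral) auto
  finally show ?thesis by simp
qed

definition li :: "(nat \<Rightarrow> complex^'n) \<Rightarrow> nat \<Rightarrow> bool" where
  "li v r \<longleftrightarrow> (\<forall>a. (\<Sum>i<r. a i *s v i) = 0 \<longrightarrow> (\<forall>i<r. a i = 0))"

definition sm :: "complex \<Rightarrow> complex^'c^'r \<Rightarrow> complex^'c^'r" where
  "sm c M = (\<chi> a b. c * M$a$b)"

lemma sm_component[simp]: "sm c M $ a $ b = c * M $ a $ b"
  by (simp add: sm_def)

lemma orth_li:
  assumes nz: "\<forall>i<r. w i \<noteq> 0"
    and orth: "\<forall>i<r. \<forall>j<r. i \<noteq> j \<longrightarrow> cinner (w i) (w j) = 0"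
  shows "li w r"
  unfolding li_def
proof (intro allI impI)
  fix a i assume s: "(\<Sum>i<r. a i *s w i) = 0" and i: "i < r"
  have "0 = cinner (w i) (\<Sum>j<r. a j *s w j)" using s by simp
  also have "\<dots> = (\<Sum>j<r. a j * cinner (w i) (w j))"
    by (simp add: cinner_sum_right cinner_scale_right)
  also have "\<dots> = a i * cinner (w i) (w i)"
    using i orth by (intro sum_single) auto
  finally show "a i = 0" using nz i by (simp add: cinner_self_eq0)
qed

definition Dm :: "(nat \<Rightarrow> complex^'n) \<Rightarrow> nat \<Rightarrow> (nat \<times> nat \<Rightarrow> complex) \<Rightarrow> complex^'n^'n" where
  "Dm v r c = (\<Sum>i<r. \<Sum>j<r. sm (c (i,j)) (outer (v i) (v j)))"

lemma Dm_component: "Dm v r c $ p $ q = (\<Sum>i<r. \<Sum>j<r. c (i,j) * (v i $ p * cnj (v j $ q)))"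
  by (simp add: Dm_def sum_component outer_def)

lemma Dm_nonzero:
  assumes li: "li v r" and D0: "Dm v r c = 0" and ij: "i < r" "j < r"
  shows "c (i,j) = 0"
proof -
  have a0: "(\<Sum>j<r. c (i,j) * cnj (v j $ q)) = 0" if "i < r" for i q
  proof -
    define a where "a = (\<lambda>i. \<Sum>j<r. c (i,j) * cnj (v j $ q))"
    have "(\<Sum>i<r. a i *s v i) = 0"
    proof (rule vec_eq_iff[THEN iffD2], rule allI)
      fix p
      have "Dm v r c $ p $ q = 0" using D0 by simp
      then show "(\<Sum>i<r. a i *s v i) $ p = 0 $ p"
        by (simp add: a_def Dm_component sum_component sum_distrib_left mult_ac)
    qed
    then have "a i = 0" using li that unfolding li_def by blast
    then show ?thesis by (simp add: a_def)
  qed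
  have "(\<Sum>j<r. cnj (c (i,j)) *s v j) = 0"
  proof (rule vec_eq_iff[THEN iffD2], rule allI)
    fix q
    have "cnj (\<Sum>j<r. c (i,j) * cnj (v j $ q)) = 0" using a0[OF ij(1)] by simp
    then show "(\<Sum>j<r. cnj (c (i,j)) *s v j) $ q = 0 $ q"
      by (simp add: sum_component)
  qed
  then show ?thesis using li[unfolded li_def, rule_format, of "\<lambda>j. cnj (c (i,j))" j] ij(2) by simp
qed

lemma outer_self_q: "cinner x (outer u u *v x) = of_real ((cmod (cinner u x))^2)"
  unfolding complex_norm_square by (simp add: outer_mv cinner_scale_right cinner_cnj)

lemma sum_outer_q:
  "cinner x ((\<Sum>i<r. outer (v i) (v i)) *v x) = of_real (\<Sum>i<r. (cmod (cinner (v i) x))^2)"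
  by (simp add: sum_mat_mv cinner_sum_right outer_self_q)

lemma sum_outer_psd: "psd (\<Sum>i<r. outer (v i) (v i))"
  unfolding psd_def sum_outer_q less_eq_complex_def by (simp add: sum_nonneg)

lemma Dm_q: fixes x :: "complex^'n" shows "cinner x (Dm v r c *v x) =
   (\<Sum>i<r. \<Sum>j<r. c (i,j) * (cnj (cinner (v i) x) * cinner (v j) x))"
proof -
  have "sm k (outer a b) *v x = (k * cinner b x) *s a" for k and a b :: "complex^'n"
    by (simp add: vec_eq_iff matrix_vector_mult_def outer_def cinner_def sum_distrib_left mult_ac)
  then show ?thesis
    by (simp add: Dm_def sum_mat_mv cinner_sum_right cinner_scale_right cinner_cnj mult_ac)
qed



definition F :: "(nat \<Rightarrow> complex^('d::finite \<times> 'm::finite)) \<Rightarrow> nat \<Rightarrow> nat \<Rightarrow> complex^'m^'m" where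
  "F v i j = ptrace_h (outer (v i) (v j))"

lemma F_component: "F v i j $ a $ b = (\<Sum>l\<in>UNIV. v i $ (l,a) * cnj (v j $ (l,b)))"
  by (simp add: F_def ptrace_h_def outer_def)

lemma ptrace_Dm: "ptrace_h (Dm v r c) = (\<Sum>i<r. \<Sum>j<r. sm (c (i,j)) (F v i j))"
  by (simp add: vec_eq_iff ptrace_h_def Dm_component F_component sum_component
      sum_distrib_left sum.swap[of _ UNIV])

lemma ptrace_add_scale: "ptrace_h (X + t *\<^sub>R Y) = ptrace_h X + t *\<^sub>R ptrace_h Y"
  unfolding ptrace_h_def vec_eq_iff
  by (simp only: vector_add_component vector_scaleR_component vec_lambda_beta sum.distrib
      scaleR_sum_right simp_thms)

lemma Dm_q_real:
  assumes herm: "\<forall>i<r. \<forall>j<r. c (j,i) = cnj (c (i,j))"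
  shows "cnj (cinner x (Dm v r c *v x)) = cinner x (Dm v r c *v x)"
proof -
  let ?u = "\<lambda>i. cinner (v i) x"
  have "cnj (cinner x (Dm v r c *v x)) = (\<Sum>i<r. \<Sum>j<r. cnj (c (i,j)) * (?u i * cnj (?u j)))"
    unfolding Dm_q by (simp only: cnj_sum complex_cnj_mult complex_cnj_cnj)
  also have "\<dots> = (\<Sum>i<r. \<Sum>j<r. c (j,i) * (cnj (?u j) * ?u i))"
  proof (intro sum.cong refl)
    fix i j assume "i \<in> {..<r}" "j \<in> {..<r}"
    then have "c (j,i) = cnj (c (i,j))" using herm by blast
    then show "cnj (c (i,j)) * (?u i * cnj (?u j)) = c (j,i) * (cnj (?u j) * ?u i)"
      by (simp only: mult.commute)
  qed
  also have "\<dots> = (\<Sum>j<r. \<Sum>i<r. c (j,i) * (cnj (?u j) * ?u i))"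
    by (rule sum.swap)
  also have "\<dots> = cinner x (Dm v r c *v x)" unfolding Dm_q ..
  finally show ?thesis .
qed

lemma Dm_q_bound:
  "cmod (cinner x (Dm v r c *v x)) \<le>
     (\<Sum>i<r. \<Sum>j<r. cmod (c (i,j))) * (\<Sum>i<r. (cmod (cinner (v i) x))^2)"
proof -
  let ?u = "\<lambda>i. cinner (v i) x"
  define S where "S = (\<Sum>i<r. (cmod (?u i))^2)"
  have S0: "0 \<le> S" unfolding S_def by (simp add: sum_nonneg)
  have usq: "(cmod (?u i))^2 \<le> S" if "i < r" for i
    unfolding S_def using that by (intro member_le_sum) auto
  have uu: "cmod (?u i) * cmod (?u j) \<le> S" if "i < r" "j < r" for i j
  proof (rule power2_le_imp_le)
    have "(cmod (?u i) * cmod (?u j))^2 = (cmod (?u i))^2 * (cmod (?u j))^2"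
      by (simp add: power_mult_distrib)
    also have "\<dots> \<le> S * S" using usq[OF that(1)] usq[OF that(2)] S0
      by (intro mult_mono) auto
    finally show "(cmod (?u i) * cmod (?u j))^2 \<le> S^2" by (simp add: power2_eq_square)
  qed (rule S0)
  have "cmod (cinner x (Dm v r c *v x)) \<le> (\<Sum>i<r. cmod (\<Sum>j<r. c (i,j) * (cnj (?u i) * ?u j)))"
    unfolding Dm_q by (rule norm_sum)
  also have "\<dots> \<le> (\<Sum>i<r. \<Sum>j<r. cmod (c (i,j) * (cnj (?u i) * ?u j)))"
    by (intro sum_mono norm_sum)
  also have "\<dots> \<le> (\<Sum>i<r. \<Sum>j<r. cmod (c (i,j)) * S)"
    using uu by (intro sum_mono) (auto simp: norm_mult intro!: mult_left_mono)
  also have "\<dots> = (\<Sum>i<r. \<Sum>j<r. cmod (c (i,j))) * S"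
    by (simp add: sum_distrib_right)
  finally show ?thesis unfolding S_def .
qed

lemma perturb_psd:
  fixes v :: "nat \<Rightarrow> complex^'n"
  assumes herm: "\<forall>i<r. \<forall>j<r. c (j,i) = cnj (c (i,j))"
    and t: "\<bar>t\<bar> * (\<Sum>i<r. \<Sum>j<r. cmod (c (i,j))) \<le> 1"
  shows "psd ((\<Sum>i<r. outer (v i) (v i)) + t *\<^sub>R Dm v r c)"
  unfolding psd_def
proof
  fix x :: "complex^'n"
  define C where "C = (\<Sum>i<r. \<Sum>j<r. cmod (c (i,j)))"
  define S where "S = (\<Sum>i<r. (cmod (cinner (v i) x))^2)"
  define q where "q = cinner x (Dm v r c *v x)"
  have S0: "0 \<le> S" unfolding S_def by (simp add: sum_nonneg)
  have "cnj q = q" unfolding q_def by (rule Dm_q_real[OF herm])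
  then have qreal: "Im q = 0" by (simp add: complex_eq_iff)
  have qb: "cmod q \<le> C * S" unfolding q_def C_def S_def by (rule Dm_q_bound)
  have "\<bar>t * Re q\<bar> \<le> \<bar>t\<bar> * (C * S)"
    using qb abs_Re_le_cmod[of q] by (simp add: abs_mult mult_left_mono)
  also have "\<dots> = (\<bar>t\<bar> * C) * S" by simp
  also have "\<dots> \<le> 1 * S" using t S0 unfolding C_def by (intro mult_right_mono) auto
  finally have key: "0 \<le> S + t * Re q" by linarith
  have mv: "((\<Sum>i<r. outer (v i) (v i)) + t *\<^sub>R Dm v r c) *v x
      = (\<Sum>i<r. outer (v i) (v i)) *v x + of_real t *s (Dm v r c *v x)"
    by (simp only: matrix_vector_mult_add_rdistrib scaleR_mat_mv)
  have "cinner x (((\<Sum>i<r. outer (v i) (v i)) + t *\<^sub>R Dm v r c) *v x) = of_real S + of_real t * q"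
    unfolding q_def S_def mv by (simp only: cinner_add_right cinner_scale_right sum_outer_q)
  then show "0 \<le> cinner x (((\<Sum>i<r. outer (v i) (v i)) + t *\<^sub>R Dm v r c) *v x)"
    using key qreal by (simp add: less_eq_complex_def)
qed



definition rel :: "(nat \<Rightarrow> complex^('d::finite \<times> 'm::finite)) \<Rightarrow> nat \<Rightarrow> (nat \<times> nat \<Rightarrow> complex) \<Rightarrow> bool" where
  "rel v r c \<longleftrightarrow> (\<Sum>i<r. \<Sum>j<r. sm (c (i,j)) (F v i j)) = 0"

lemma rel_entry: "rel v r c \<longleftrightarrow> (\<forall>a b. (\<Sum>i<r. \<Sum>j<r. c (i,j) * F v i j $ a $ b) = 0)"
  by (simp add: rel_def vec_eq_iff sum_component)

lemma F_adj: "F v i j $ a $ b = cnj (F v j i $ b $ a)"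
  by (simp add: F_component mult.commute)

lemma rel_adj:
  assumes "rel v r c"
  shows "rel v r (\<lambda>(i,j). cnj (c (j,i)))"
  unfolding rel_entry
proof (intro allI)
  fix a b
  have "(\<Sum>i<r. \<Sum>j<r. (\<lambda>(i,j). cnj (c (j,i))) (i,j) * F v i j $ a $ b)
      = cnj (\<Sum>i<r. \<Sum>j<r. c (j,i) * F v j i $ b $ a)"
    by (simp add: F_adj[of v _ _ a b])
  also have "(\<Sum>i<r. \<Sum>j<r. c (j,i) * F v j i $ b $ a) = (\<Sum>j<r. \<Sum>i<r. c (j,i) * F v j i $ b $ a)"
    by (rule sum.swap)
  also have "\<dots> = 0" using assms unfolding rel_entry by blast
  finally show "(\<Sum>i<r. \<Sum>j<r. (\<lambda>(i,j). cnj (c (j,i))) (i,j) * F v i j $ a $ b) = 0" by simp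
qed

lemma rel_lin:
  assumes "rel v r c" "rel v r d"
  shows "rel v r (\<lambda>p. \<alpha> * c p + \<beta> * d p)"
  unfolding rel_entry
proof (intro allI)
  fix a b
  have "(\<Sum>i<r. \<Sum>j<r. (\<alpha> * c (i,j) + \<beta> * d (i,j)) * F v i j $ a $ b)
     = \<alpha> * (\<Sum>i<r. \<Sum>j<r. c (i,j) * F v i j $ a $ b) + \<beta> * (\<Sum>i<r. \<Sum>j<r. d (i,j) * F v i j $ a $ b)"
    by (simp add: sum_distrib_left sum.distrib algebra_simps)
  then show "(\<Sum>i<r. \<Sum>j<r. (\<alpha> * c (i,j) + \<beta> * d (i,j)) * F v i j $ a $ b) = 0"
    using assms unfolding rel_entry by simp
qed

lemma lif_rel: "lin_indep_family (\<lambda>(i,j). F v i j) ({..<r} \<times> {..<r}) \<longleftrightarrow>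
   (\<forall>c. rel v r c \<longrightarrow> (\<forall>i<r. \<forall>j<r. c (i,j) = 0))"
proof -
  have "(\<Sum>p\<in>{..<r} \<times> {..<r}. (\<chi> a b. c p * (\<lambda>(i,j). F v i j) p $ a $ b))
      = (\<Sum>i<r. \<Sum>j<r. sm (c (i,j)) (F v i j))" for c
    by (simp add: sum.cartesian_product' sm_def)
  then show ?thesis unfolding lin_indep_family_def rel_def by auto
qed

lemma extreme_imp_indep:
  fixes v :: "nat \<Rightarrow> complex^('d::finite \<times> 'm::finite)"
  assumes li: "li v r" and X: "X = (\<Sum>i<r. outer (v i) (v i))"
    and ext: "X extreme_point_of seeds"
  shows "lin_indep_family (\<lambda>(i,j). F v i j) ({..<r} \<times> {..<r})"
proof (rule ccontr)
  assume "\<not> ?thesis"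
  then obtain c k l where relc: "rel v r c" and kl: "k < r" "l < r" "c (k,l) \<noteq> 0"
    unfolding lif_rel by blast
  define cs where "cs = (\<lambda>(i,j). cnj (c (j,i)))"
  have relcs: "rel v r cs" unfolding cs_def by (rule rel_adj[OF relc])
  define c1 where "c1 = (\<lambda>p. 1 * c p + 1 * cs p)"
  define c2 where "c2 = (\<lambda>p. \<i> * c p + (- \<i>) * cs p)"
  have rel1: "rel v r c1" unfolding c1_def by (rule rel_lin[OF relc relcs])
  have rel2: "rel v r c2" unfolding c2_def by (rule rel_lin[OF relc relcs])
  have h1: "\<forall>i<r. \<forall>j<r. c1 (j,i) = cnj (c1 (i,j))" by (simp add: c1_def cs_def)
  have h2: "\<forall>i<r. \<forall>j<r. c2 (j,i) = cnj (c2 (i,j))" by (simp add: c2_def cs_def algebra_simps)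
  have "c1 (k,l) + (- \<i>) * c2 (k,l) = 2 * c (k,l)" by (simp add: c1_def c2_def algebra_simps)
  then have "c1 (k,l) \<noteq> 0 \<or> c2 (k,l) \<noteq> 0" using kl(3) by auto
  then obtain c' where relc': "rel v r c'" and hc': "\<forall>i<r. \<forall>j<r. c' (j,i) = cnj (c' (i,j))"
    and nz: "c' (k,l) \<noteq> 0"
    using rel1 rel2 h1 h2 by blast
  define D where "D = Dm v r c'"
  have Dnz: "D \<noteq> 0" using Dm_nonzero[OF li _ kl(1,2), of c'] nz unfolding D_def by blast
  define C where "C = (\<Sum>i<r. \<Sum>j<r. cmod (c' (i,j)))"
  have C0: "0 \<le> C" unfolding C_def by (simp add: sum_nonneg)
  define t where "t = 1 / (C + 1)"
  have t0: "0 < t" using C0 by (simp add: t_def)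
  have tC: "\<bar>t\<bar> * C \<le> 1" "\<bar>-t\<bar> * C \<le> 1" using C0 t0 by (simp_all add: t_def field_simps)
  define A where "A = X + t *\<^sub>R D"
  define B where "B = X + (-t) *\<^sub>R D"
  have Xs: "X \<in> seeds" using ext unfolding extreme_point_of_def by blast
  have pD: "ptrace_h D = 0" unfolding D_def ptrace_Dm using relc' unfolding rel_def .
  have "psd A" unfolding A_def X D_def using perturb_psd[OF hc', of t v] tC(1) unfolding C_def by blast
  moreover have "ptrace_h A = ptrace_h X" unfolding A_def ptrace_add_scale pD by simp
  ultimately have As: "A \<in> seeds" using Xs unfolding seeds_def by simp
  have "psd B" unfolding B_def X D_def using perturb_psd[OF hc', of "-t" v] tC(2) unfolding C_def by blast
  moreover have "ptrace_h B = ptrace_h X" unfolding B_def ptrace_add_scale pD by simp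
  ultimately have Bs: "B \<in> seeds" using Xs unfolding seeds_def by simp
  have "A \<noteq> B"
  proof
    assume "A = B"
    then have eq: "t *\<^sub>R D = (-t) *\<^sub>R D" unfolding A_def B_def by simp
    have "(t - (-t)) *\<^sub>R D = 0" unfolding scaleR_left_diff_distrib eq by simp
    moreover have "t - (-t) \<noteq> 0" using t0 by simp
    ultimately show False using Dnz by (simp only: scaleR_eq_0_iff) blast
  qed
  then have "midpoint A B \<in> open_segment A B" by (simp add: midpoint_in_open_segment)
  moreover have "midpoint A B = X"
  proof -
    have "A + B = X + X" unfolding A_def B_def by (simp add: scaleR_minus_left)
    then have "midpoint A B = (1/2) *\<^sub>R X + (1/2) *\<^sub>R X"
      unfolding midpoint_def by (simp only: scaleR_right_distrib) simp
    also have "\<dots> = (1/2 + 1/2) *\<^sub>R X" by (simp only: scaleR_left_distrib)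
    finally show ?thesis by simp
  qed
  ultimately show False using ext As Bs unfolding extreme_point_of_def by blast
qed



lemma Dm_delta: "Dm w r (\<lambda>(i,j). if i = j then 1 else 0) = (\<Sum>i<r. outer (w i) (w i))"
proof -
  have "Dm w r (\<lambda>(i,j). if i = j then 1 else 0) = (\<Sum>i<r. \<Sum>j<r. if i = j then outer (w i) (w j) else 0)"
    unfolding Dm_def by (intro sum.cong refl) (simp add: sm_def vec_eq_iff)
  also have "\<dots> = (\<Sum>i<r. outer (w i) (w i))"
    by (intro sum.cong refl) (simp add: sum.delta)
  finally show ?thesis .
qed

lemma face_lemma:
  fixes w :: "nat \<Rightarrow> complex^('d::finite \<times> 'm::finite)"
  assumes nz: "\<forall>i<r. w i \<noteq> 0"
    and orth: "\<forall>i<r. \<forall>j<r. i \<noteq> j \<longrightarrow> cinner (w i) (w j) = 0"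
    and X: "X = (\<Sum>i<r. outer (w i) (w i))"
    and Xs: "X \<in> seeds" and As: "A \<in> seeds" and Bs: "B \<in> seeds"
    and u: "0 < u" "u < 1" and XAB: "X = (1 - u) *\<^sub>R A + u *\<^sub>R B"
    and indep: "lin_indep_family (\<lambda>(i,j). F w i j) ({..<r} \<times> {..<r})"
  shows "A = X"
proof -
  have pA: "psd A" and pB: "psd B" using As Bs unfolding seeds_def by auto
  define n where "n i = cinner (w i) (w i)" for i
  have n0: "n i \<noteq> 0" if "i < r" for i using nz that unfolding n_def by (simp add: cinner_self_eq0)
  have kerA: "A *v y = 0" if hy: "\<forall>i<r. cinner (w i) y = 0" for y
  proof -
    have "X *v y = 0" unfolding X using hy by (simp add: sum_mat_mv outer_mv)
    then have "cinner y (X *v y) = 0" by simp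
    moreover have "cinner y (X *v y) = of_real (1 - u) * cinner y (A *v y) + of_real u * cinner y (B *v y)"
      unfolding XAB by (simp only: matrix_vector_mult_add_rdistrib scaleR_mat_mv cinner_add_right cinner_scale_right)
    ultimately have "0 = Re (of_real (1 - u) * cinner y (A *v y) + of_real u * cinner y (B *v y))"
      by simp
    then have e: "(1 - u) * Re (cinner y (A *v y)) + u * Re (cinner y (B *v y)) = 0" by simp
    have "0 \<le> Re (cinner y (A *v y))" "0 \<le> Re (cinner y (B *v y))"
      using psd_Re[OF pA] psd_Re[OF pB] by auto
    then have "(1 - u) * Re (cinner y (A *v y)) = 0" using e u
      by (smt (verit) mult_nonneg_nonneg)
    then have "Re (cinner y (A *v y)) = 0" using u by simp
    then have "cinner y (A *v y) = 0" using psd_Im[OF pA, of y] by (simp add: complex_eq_iff)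
    then show ?thesis by (rule psd_kernel[OF pA])
  qed
  define P where "P x = (\<Sum>i<r. (cinner (w i) x / n i) *s w i)" for x
  have orthP: "cinner (w k) (x - P x) = 0" if "k < r" for k x
  proof -
    have "cinner (w k) (P x) = (\<Sum>i<r. (cinner (w i) x / n i) * cinner (w k) (w i))"
      unfolding P_def by (simp add: cinner_sum_right cinner_scale_right)
    also have "\<dots> = (cinner (w k) x / n k) * cinner (w k) (w k)"
      using that orth by (intro sum_single) auto
    also have "\<dots> = cinner (w k) x" using n0[OF that] by (simp add: n_def)
    finally show ?thesis by (simp add: cinner_diff_right)
  qed
  have AP: "A *v x = A *v P x" for x
  proof -
    have "A *v (x - P x) = 0" using orthP by (intro kerA) auto
    then show ?thesis by (simp add: matrix_vector_mult_diff_distrib)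
  qed
  have PA: "A *v z = P (A *v z)" for z
  proof -
    define y where "y = A *v z - P (A *v z)"
    have Ay: "A *v y = 0" unfolding y_def using orthP by (intro kerA) auto
    have "cinner y (A *v z) = cnj (cinner z (A *v y))" by (rule psd_herm[OF pA])
    then have c1: "cinner y (A *v z) = 0" using Ay by simp
    have "cinner y (P (A *v z)) = (\<Sum>i<r. (cinner (w i) (A *v z) / n i) * cinner y (w i))"
      unfolding P_def by (simp add: cinner_sum_right cinner_scale_right)
    also have "\<dots> = 0"
    proof (intro sum.neutral ballI)
      fix i assume "i \<in> {..<r}"
      then have "cinner (w i) y = 0" unfolding y_def using orthP by simp
      then have "cinner y (w i) = 0" by (metis cinner_cnj complex_cnj_zero)
      then show "(cinner (w i) (A *v z) / n i) * cinner y (w i) = 0" by simp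
    qed
    finally have "cinner y y = 0" using c1 unfolding y_def by (simp add: cinner_diff_right)
    then show ?thesis unfolding y_def by (simp add: cinner_self_eq0)
  qed
  define c where "c = (\<lambda>(i,j). cinner (w i) (A *v w j) / (n i * n j))"
  have ADm: "A = Dm w r c"
  proof (rule vec_eq_iff[THEN iffD2], rule allI, rule vec_eq_iff[THEN iffD2], rule allI)
    fix a b
    have "A $ a $ b = (A *v axis b 1) $ a" by (simp add: axis_mv)
    also have "A *v axis b 1 = (\<Sum>j<r. (cnj (w j $ b) / n j) *s (A *v w j))"
      using AP[of "axis b 1"] unfolding P_def
      by (simp add: vec.sum vector_scalar_commute cinner_axis_right)
    also have "\<dots> = (\<Sum>j<r. (cnj (w j $ b) / n j) *s (\<Sum>i<r. (cinner (w i) (A *v w j) / n i) *s w i))"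
      using PA unfolding P_def by metis
    finally have "A $ a $ b = (\<Sum>j<r. \<Sum>i<r. (cnj (w j $ b) / n j) * ((cinner (w i) (A *v w j) / n i) * w i $ a))"
      by (simp add: sum_component sum_distrib_left)
    also have "\<dots> = (\<Sum>i<r. \<Sum>j<r. (cnj (w j $ b) / n j) * ((cinner (w i) (A *v w j) / n i) * w i $ a))"
      by (rule sum.swap)
    also have "\<dots> = Dm w r c $ a $ b"
      unfolding Dm_component c_def by (intro sum.cong refl) (simp add: field_simps)
    finally show "A $ a $ b = Dm w r c $ a $ b" .
  qed
  define \<delta> where "\<delta> = (\<lambda>(i::nat,j::nat). if i = j then (1::complex) else 0)"
  have XD: "X = Dm w r \<delta>" unfolding X \<delta>_def by (rule Dm_delta[symmetric])
  have "ptrace_h A = ptrace_h X" using As Xs unfolding seeds_def by simp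
  then have "rel w r (\<lambda>p. 1 * c p + (-1) * \<delta> p)"
    unfolding rel_entry ADm XD ptrace_Dm
    by (simp add: vec_eq_iff sum_component algebra_simps sum_subtractf)
  then have "\<forall>i<r. \<forall>j<r. c (i,j) = \<delta> (i,j)"
    using indep unfolding lif_rel by fastforce
  then have "Dm w r c = Dm w r \<delta>" unfolding Dm_def by (intro sum.cong refl) auto
  then show ?thesis using ADm XD by simp
qed

lemma indep_imp_extreme:
  fixes w :: "nat \<Rightarrow> complex^('d::finite \<times> 'm::finite)"
  assumes nz: "\<forall>i<r. w i \<noteq> 0"
    and orth: "\<forall>i<r. \<forall>j<r. i \<noteq> j \<longrightarrow> cinner (w i) (w j) = 0"
    and X: "X = (\<Sum>i<r. outer (w i) (w i))"
    and Xs: "X \<in> seeds"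
    and indep: "lin_indep_family (\<lambda>(i,j). F w i j) ({..<r} \<times> {..<r})"
  shows "X extreme_point_of seeds"
  unfolding extreme_point_of_def
proof (intro conjI ballI Xs notI)
  fix A B assume As: "A \<in> seeds" and Bs: "B \<in> seeds" and "X \<in> open_segment A B"
  then obtain u where AB: "A \<noteq> B" and u: "0 < u" "u < 1" and XAB: "X = (1 - u) *\<^sub>R A + u *\<^sub>R B"
    unfolding in_segment by blast
  have "A = X" using face_lemma[OF nz orth X Xs As Bs u XAB indep] .
  moreover have "B = X"
  proof -
    have "X = (1 - (1 - u)) *\<^sub>R B + (1 - u) *\<^sub>R A" using XAB by simp
    moreover have "0 < 1 - u" "1 - u < 1" using u by auto
    ultimately show ?thesis using face_lemma[OF nz orth X Xs Bs As] indep by blast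
  qed
  ultimately show False using AB by simp
qed



lemma rank_sum_outer:
  fixes v :: "nat \<Rightarrow> complex^'n"
  shows "rank (\<Sum>i<r. outer (v i) (v i)) \<le> r"
proof -
  define X where "X = (\<Sum>i<r. outer (v i) (v i))"
  define cv where "cv i = (\<chi> q. cnj (v i $ q))" for i
  have "rows X \<subseteq> vec.span (cv ` {..<r})"
  proof
    fix y assume "y \<in> rows X"
    then obtain p where y: "y = row p X" unfolding rows_def by blast
    have "y = (\<Sum>i<r. (v i $ p) *s cv i)"
      unfolding y X_def by (simp add: vec_eq_iff row_def cv_def sum_component outer_def)
    also have "\<dots> \<in> vec.span (cv ` {..<r})"
      by (intro vec.span_sum vec.span_scale vec.span_base) auto
    finally show "y \<in> vec.span (cv ` {..<r})" .
  qed
  then have "vec.dim (rows X) \<le> card (cv ` {..<r})"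
    by (intro vec.dim_le_card) auto
  also have "\<dots> \<le> r" using card_image_le[of "{..<r}" cv] by simp
  finally show ?thesis unfolding X_def row_rank_def_gen .
qed

lemma lif_inj:
  fixes f :: "'i \<Rightarrow> complex^'c^'r"
  assumes "lin_indep_family f I" "finite I"
  shows "inj_on f I"
proof (rule inj_onI, rule ccontr)
  fix p q assume p: "p \<in> I" and q: "q \<in> I" and fpq: "f p = f q" and pq: "p \<noteq> q"
  define c where "c x = (if x = p then 1 else if x = q then -1 else (0::complex))" for x
  have "(\<Sum>x\<in>I. (\<chi> a b. c x * f x $ a $ b)) = 0"
  proof (rule vec_eq_iff[THEN iffD2], rule allI, rule vec_eq_iff[THEN iffD2], rule allI)
    fix a b
    have "(\<Sum>x\<in>I. c x * f x $ a $ b) = (\<Sum>x\<in>I. (if x = p then f p $ a $ b else 0) - (if x = q then f q $ a $ b else 0))"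
      by (intro sum.cong refl) (auto simp: c_def pq)
    also have "\<dots> = 0" using p q fpq assms(2) by (simp add: sum_subtractf sum.delta)
    finally show "(\<Sum>x\<in>I. (\<chi> a b. c x * f x $ a $ b)) $ a $ b = 0 $ a $ b" by (simp add: sum_component)
  qed
  then have "c p = 0" using assms(1) p unfolding lin_indep_family_def by blast
  then show False by (simp add: c_def)
qed

lemma lif_card:
  fixes f :: "'i \<Rightarrow> complex^'m^'m"
  assumes li: "lin_indep_family f I" and fin: "finite I"
  shows "card I \<le> CARD('m) * CARD('m)"
proof -
  define fl :: "complex^'m^'m \<Rightarrow> complex^('m \<times> 'm)" where "fl M = (\<chi> p. M $ fst p $ snd p)" for M
  have fl_comp: "fl M $ (a,b) = M $ a $ b" for M a b by (simp add: fl_def)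
  have inj_fl: "inj fl"
    by (rule injI) (metis fl_comp vec_eq_iff)
  have injf: "inj_on f I" by (rule lif_inj[OF li fin])
  have injc: "inj_on (fl \<circ> f) I" using injf inj_fl by (simp add: comp_inj_on inj_on_subset subset_UNIV)
  define S where "S = (fl \<circ> f) ` I"
  have "vec.independent S"
  proof (rule vec.independent_if_scalars_zero)
    show "finite S" unfolding S_def using fin by simp
  next
    fix g :: "complex^('m \<times> 'm) \<Rightarrow> complex" and y
    assume sg: "(\<Sum>x\<in>S. g x *s x) = 0" and yS: "y \<in> S"
    define c where "c x = g (fl (f x))" for x
    have "(\<Sum>x\<in>I. c x *s fl (f x)) = 0"
      using sg unfolding S_def sum.reindex[OF injc] by (simp add: c_def)
    then have rel: "(\<Sum>x\<in>I. (\<chi> a b. c x * f x $ a $ b)) = 0"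
      by (simp add: vec_eq_iff sum_component fl_comp)
    obtain x where x: "x \<in> I" "y = fl (f x)" using yS unfolding S_def by auto
    have "c x = 0" using li rel x(1) unfolding lin_indep_family_def by blast
    then show "g y = 0" by (simp add: c_def x(2))
  qed
  then have "card S \<le> vec.dim S" using vec.independent_bound_general by blast
  also have "\<dots> \<le> CARD('m \<times> 'm)" by (rule dim_subset_UNIV_cart_gen)
  finally have "card S \<le> CARD('m) * CARD('m)" by simp
  moreover have "card S = card I" unfolding S_def by (rule card_image[OF injc])
  ultimately show ?thesis by simp
qed



lemma psd_entry_herm:
  assumes "psd X" shows "X $ p $ q = cnj (X $ q $ p)"
  using psd_herm[OF assms, of "axis p 1" "axis q 1"] by (simp add: axis_mv cinner_axis_left)

lemma psd_diag: "cinner (axis p 1) (X *v axis p 1) = X $ p $ p"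
  by (simp add: axis_mv cinner_axis_left)

lemma psd_col_zero:
  assumes "psd X" "X $ p $ p = 0" shows "X $ q $ p = 0"
proof -
  have "X *v axis p 1 = 0" using psd_kernel[OF assms(1)] assms(2) psd_diag by metis
  then show ?thesis by (simp add: axis_mv vec_eq_iff)
qed

lemma chol_step:
  fixes X :: "complex^'n^'n"
  assumes pX: "psd X" and de: "X $ e $ e \<noteq> 0"
  obtains v where "psd (X - outer v v)" "v $ e \<noteq> 0"
    "{p. (X - outer v v) $ p $ p \<noteq> 0} \<subseteq> {p. X $ p $ p \<noteq> 0} - {e}"
proof -
  define d where "d = Re (X $ e $ e)"
  have Im0: "Im (X $ e $ e) = 0" using psd_Im[OF pX, of "axis e 1"] psd_diag by metis
  have Re0: "0 \<le> d" using psd_Re[OF pX, of "axis e 1"] psd_diag unfolding d_def by metis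
  have dd: "X $ e $ e = of_real d" using Im0 by (simp add: d_def complex_eq_iff)
  have dpos: "0 < d" using Re0 de dd by force
  define s where "s = sqrt d"
  have spos: "0 < s" using dpos by (simp add: s_def)
  have ss: "s * s = d" using dpos by (simp add: s_def)
  define v where "v = (\<chi> p. X $ p $ e / of_real s)"
  have herm: "\<And>p q. X $ p $ q = cnj (X $ q $ p)" using psd_entry_herm[OF pX] by blast
  have cv: "cinner v x = (X *v x) $ e / of_real s" for x
  proof -
    have "cinner v x = (\<Sum>p\<in>UNIV. cnj (X $ p $ e) * x $ p / of_real s)"
      unfolding cinner_def v_def by simp
    also have "\<dots> = (\<Sum>p\<in>UNIV. X $ e $ p * x $ p) / of_real s"
      by (simp add: sum_divide_distrib herm[of _ e])
    finally show ?thesis by (simp add: matrix_vector_mult_def)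
  qed
  have psd': "psd (X - outer v v)"
    unfolding psd_def
  proof
    fix x :: "complex^'n"
    define p0 where "p0 = (X *v x) $ e"
    define t where "t = - p0 / of_real d"
    define y where "y = x + t *s axis e 1"
    have q1: "cinner x ((X - outer v v) *v x) = cinner x (X *v x) - p0 * cnj p0 / of_real d"
    proof -
      have "cinner x ((X - outer v v) *v x) = cinner x (X *v x) - cinner v x * cnj (cinner v x)"
        by (simp add: mv_minus outer_mv cinner_diff_right cinner_scale_right cinner_cnj)
      also have "cinner v x * cnj (cinner v x) = p0 * cnj p0 / of_real d"
        unfolding cv p0_def using spos by (simp add: ss[symmetric] field_simps)
      finally show ?thesis .
    qed
    have exp: "cinner y (X *v y) = cinner x (X *v x) + t * cinner x (X *v axis e 1)
        + cnj t * cinner (axis e 1) (X *v x) + cnj t * t * cinner (axis e 1) (X *v axis e 1)"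
      unfolding y_def
      by (simp add: matrix_vector_right_distrib vector_scalar_commute cinner_add_left
          cinner_add_right cinner_scale_left cinner_scale_right algebra_simps)
    have a1: "cinner (axis e 1) (X *v x) = p0" by (simp add: p0_def cinner_axis_left)
    have a2: "cinner x (X *v axis e 1) = cnj p0"
      using psd_herm[OF pX, of x "axis e 1"] a1 by simp
    have a3: "cinner (axis e 1) (X *v axis e 1) = of_real d" using psd_diag dd by metis
    have "cinner y (X *v y) = cinner x (X *v x) - p0 * cnj p0 / of_real d"
      unfolding exp a1 a2 a3 t_def using dpos by (simp add: field_simps power2_eq_square)
    then have "cinner x ((X - outer v v) *v x) = cinner y (X *v y)" using q1 by simp
    then show "0 \<le> cinner x ((X - outer v v) *v x)" using pX unfolding psd_def by simp
  qed
  have ve: "v $ e = of_real d / of_real s" by (simp add: v_def dd)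
  have ve0: "v $ e \<noteq> 0" using ve dpos spos by simp
  have sub: "{p. (X - outer v v) $ p $ p \<noteq> 0} \<subseteq> {p. X $ p $ p \<noteq> 0} - {e}"
  proof
    fix p assume "p \<in> {p. (X - outer v v) $ p $ p \<noteq> 0}"
    then have np: "X $ p $ p - v $ p * cnj (v $ p) \<noteq> 0" by (simp add: outer_def)
    have "p \<noteq> e"
    proof
      assume "p = e"
      then have "X $ p $ p - v $ p * cnj (v $ p) = of_real d - of_real d * of_real d / (of_real s * of_real s)"
        by (simp add: ve dd)
      also have "\<dots> = 0"
      proof -
        have "of_real s * of_real s = (of_real d :: complex)" using ss by (metis of_real_mult)
        then show ?thesis using dpos by simp
      qed
      finally show False using np by simp
    qed
    moreover have "X $ p $ p \<noteq> 0"
    proof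
      assume "X $ p $ p = 0"
      then have "X $ e $ p = 0" by (rule psd_col_zero[OF pX])
      then have "X $ p $ e = 0" using herm[of p e] by simp
      then have "v $ p = 0" by (simp add: v_def)
      then show False using np \<open>X $ p $ p = 0\<close> by simp
    qed
    ultimately show "p \<in> {p. X $ p $ p \<noteq> 0} - {e}" by simp
  qed
  show ?thesis using that psd' ve0 sub by blast
qed

lemma chol:
  fixes X :: "complex^'n^'n"
  assumes "psd X"
  shows "\<exists>r v. li v r \<and> X = (\<Sum>i<r. outer (v i) (v i))"
  using assms
proof (induction "card {p. X $ p $ p \<noteq> 0}" arbitrary: X rule: less_induct)
  case less
  show ?case
  proof (cases "\<forall>p. X $ p $ p = 0")
    case True
    have "X = 0"
      unfolding vec_eq_iff using psd_col_zero[OF less.prems] True by simp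
    moreover have "li (\<lambda>_. 0 :: complex^'n) 0" by (simp add: li_def)
    ultimately have "li (\<lambda>_. 0 :: complex^'n) 0 \<and> X = (\<Sum>i<(0::nat). outer ((\<lambda>_. 0 :: complex^'n) i) ((\<lambda>_. 0 :: complex^'n) i))"
      by (metis lessThan_0 sum.empty)
    then show ?thesis by blast
  next
    case False
    then obtain e where de: "X $ e $ e \<noteq> 0" by blast
    obtain v where pX': "psd (X - outer v v)" and ve: "v $ e \<noteq> 0"
      and sub: "{p. (X - outer v v) $ p $ p \<noteq> 0} \<subseteq> {p. X $ p $ p \<noteq> 0} - {e}"
      using chol_step[OF less.prems de] by blast
    have "{p. (X - outer v v) $ p $ p \<noteq> 0} \<subset> {p. X $ p $ p \<noteq> 0}" using sub de by blast
    then have "card {p. (X - outer v v) $ p $ p \<noteq> 0} < card {p. X $ p $ p \<noteq> 0}"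
      by (intro psubset_card_mono) auto
    then obtain r' v' where li': "li v' r'" and X': "X - outer v v = (\<Sum>i<r'. outer (v' i) (v' i))"
      using less.hyps[OF _ pX'] by blast
    have v'e: "v' i $ e = 0" if "i < r'" for i
    proof -
      have "(X - outer v v) $ e $ e = 0" using sub by blast
      then have "of_real (\<Sum>i<r'. (cmod (cinner (v' i) (axis e 1)))^2) = (0::complex)"
        unfolding X' sum_outer_q[symmetric] psd_diag .
      then have "(\<Sum>i<r'. (cmod (cinner (v' i) (axis e 1)))^2) = 0" by (simp only: of_real_eq_0_iff)
      then have "(cmod (cinner (v' i) (axis e 1)))^2 = 0"
        using that by (subst (asm) sum_nonneg_eq_0_iff) auto
      then show ?thesis by (simp add: cinner_axis_right)
    qed
    define vn where "vn = v'(r' := v)"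
    have vn1: "(\<Sum>i<r'. outer (vn i) (vn i)) = (\<Sum>i<r'. outer (v' i) (v' i))"
      by (rule sum.cong) (auto simp: vn_def)
    have vn2: "(\<Sum>i<r'. a i *s vn i) = (\<Sum>i<r'. a i *s v' i)" for a
      by (rule sum.cong) (auto simp: vn_def)
    have vnr: "vn r' = v" by (simp add: vn_def)
    have "X = (X - outer v v) + outer v v" by simp
    also have "\<dots> = (\<Sum>i<r'. outer (vn i) (vn i)) + outer (vn r') (vn r')"
      unfolding X' vn1 vnr ..
    also have "\<dots> = (\<Sum>i<Suc r'. outer (vn i) (vn i))" by simp
    finally have XS: "X = (\<Sum>i<Suc r'. outer (vn i) (vn i))" .
    have "li vn (Suc r')"
      unfolding li_def
    proof (intro allI impI)
      fix a i assume s: "(\<Sum>i<Suc r'. a i *s vn i) = 0" and i: "i < Suc r'"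
      have s2: "(\<Sum>i<r'. a i *s v' i) + a r' *s v = 0"
        using s unfolding sum.lessThan_Suc vn2 vnr .
      then have "((\<Sum>i<r'. a i *s v' i) + a r' *s v) $ e = 0" by simp
      then have "a r' * v $ e = 0" using v'e by (simp add: sum_component)
      then have ar: "a r' = 0" using ve by simp
      then have "(\<Sum>i<r'. a i *s v' i) = 0" using s2 by simp
      then have "\<forall>i<r'. a i = 0" using li' unfolding li_def by blast
      then show "a i = 0" using i ar less_Suc_eq by auto
    qed
    then show ?thesis using XS by blast
  qed
qed



theorem theorem3:
  fixes Xi :: "complex^('d::finite \<times> 'm::finite)^('d \<times> 'm)"
    and w :: "nat \<Rightarrow> complex^('d \<times> 'm)"
    and W :: "nat \<Rightarrow> complex^'d^'m"
    and r :: nat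
  assumes "Xi \<in> seeds"
    and "r = rank Xi"
    and "\<forall>i<r. w i \<noteq> 0"
    and "\<forall>i<r. \<forall>j<r. i \<noteq> j \<longrightarrow> cinner (w i) (w j) = 0"
    and "Xi = (\<Sum>i<r. outer (w i) (w i))"
    and "\<forall>i<r. \<forall>l a. w i $ (l, a) = W i $ a $ l"
  shows "(Xi extreme_point_of seeds \<longleftrightarrow>
           lin_indep_family (\<lambda>(i, j). W i ** adj (W j)) ({..<r} \<times> {..<r}))
         \<and> (\<forall>X :: complex^('d \<times> 'm)^('d \<times> 'm).
              X extreme_point_of seeds \<longrightarrow> rank X \<le> CARD('m))"
proof
  have Fw: "F w i j = W i ** adj (W j)" if "i < r" "j < r" for i j
  proof -
    have "F w i j $ a $ b = (W i ** adj (W j)) $ a $ b" for a b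
      using assms(6) that by (simp add: F_component matrix_matrix_mult_def adj_def)
    then show ?thesis by (simp add: vec_eq_iff)
  qed
  have cong: "lin_indep_family (\<lambda>(i, j). F w i j) ({..<r} \<times> {..<r}) \<longleftrightarrow>
      lin_indep_family (\<lambda>(i, j). W i ** adj (W j)) ({..<r} \<times> {..<r})"
  proof -
    have "(\<Sum>p\<in>{..<r} \<times> {..<r}. (\<chi> a b. c p * (\<lambda>(i, j). F w i j) p $ a $ b)) =
          (\<Sum>p\<in>{..<r} \<times> {..<r}. (\<chi> a b. c p * (\<lambda>(i, j). W i ** adj (W j)) p $ a $ b))" for c
      by (rule sum.cong) (auto simp: Fw)
    then show ?thesis unfolding lin_indep_family_def by simp
  qed
  have li: "li w r" by (rule orth_li[OF assms(3,4)])
  show "Xi extreme_point_of seeds \<longleftrightarrow>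
           lin_indep_family (\<lambda>(i, j). W i ** adj (W j)) ({..<r} \<times> {..<r})"
    unfolding cong[symmetric]
    using extreme_imp_indep[OF li assms(5)] indep_imp_extreme[OF assms(3,4,5,1)] by blast
next
  show "\<forall>X :: complex^('d \<times> 'm)^('d \<times> 'm). X extreme_point_of seeds \<longrightarrow> rank X \<le> CARD('m)"
  proof (intro allI impI)
    fix X :: "complex^('d \<times> 'm)^('d \<times> 'm)"
    assume ext: "X extreme_point_of seeds"
    then have "psd X" unfolding extreme_point_of_def seeds_def by blast
    then obtain r' v where li: "li v r'" and X: "X = (\<Sum>i<r'. outer (v i) (v i))"
      using chol by blast
    have "lin_indep_family (\<lambda>(i,j). F v i j) ({..<r'} \<times> {..<r'})"
      by (rule extreme_imp_indep[OF li X ext])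
    then have "card ({..<r'} \<times> {..<r'}) \<le> CARD('m) * CARD('m)"
      by (rule lif_card) simp
    then have sq: "r' * r' \<le> CARD('m) * CARD('m)" by (simp add: card_cartesian_product)
    have "r' \<le> CARD('m)"
    proof (rule ccontr)
      assume "\<not> r' \<le> CARD('m)"
      then have "CARD('m) * CARD('m) < r' * r'" by (intro mult_strict_mono) auto
      then show False using sq by simp
    qed
    moreover have "rank X \<le> r'" unfolding X by (rule rank_sum_outer)
    ultimately show "rank X \<le> CARD('m)" by simp
  qed
qed

end
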